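(* Suppose $n\ge 3k$ and let $U_1,\dots,U_{\binom nk},V_1,\dots,V_n\in\mathbb{R}^d$ be a margin-$m$, relative-bias-$0$ embedding of $S_{n,k}$ in dimension $d$. Let $V\in\mathbb{R}^{d\times n}$ be the matrix with columns $V_1,\dots,V_n$. Then every $x\in\mathbb{R}^n$ with at most $k$ nonzero coordinates satisfies $\|Vx\|_2\ge m\|x\|_1$.
   Context: $S_{n,k}\in\{0,1\}^{\binom{n}{k}\times n}$ is the matrix whose rows are all the distinct vectors in $\{0,1\}^n$ with exactly $k$ ones, each appearing exactly once. For $A\in\{0,1\}^{N\times n}$ and $m\ge0$, unit vectors $U_1,\dots,U_N,V_1,\dots,V_n\in\mathbb{R}^d$ form a margin-$m$, relative-bias-$0$ embedding of $A$ if $\langle U_j,V_i\rangle\ge m$ whenever $A_{ji}=1$ and $\langle U_j,V_i\rangle\le -m$ whenever $A_{ji}=0$. *)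

theory Defs
  imports "HOL-Analysis.Analysis"
begin

text \<open>Rows of S_{n,k}: all 0/1 vectors of length n with exactly k ones, each exactly once.
  We index the rows by the support sets themselves (k-subsets of {0..<n});
  entry (S,i) of S_{n,k} is 1 iff i is in S.\<close>

definition Snk_rows :: "nat \<Rightarrow> nat \<Rightarrow> nat set set" where
  "Snk_rows n k = {S. S \<subseteq> {0..<n} \<and> card S = k}"

definition Snk :: "nat set \<Rightarrow> nat \<Rightarrow> bool" where
  "Snk S i \<longleftrightarrow> i \<in> S"

definition margin_embedding ::
  "('j \<Rightarrow> nat \<Rightarrow> bool) \<Rightarrow> 'j set \<Rightarrow> nat \<Rightarrow> real \<Rightarrow> ('j \<Rightarrow> 'a::real_inner) \<Rightarrow> (nat \<Rightarrow> 'a) \<Rightarrow> bool" where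
  "margin_embedding A J n m U V \<longleftrightarrow>
     m \<ge> 0 \<and>
     (\<forall>j\<in>J. norm (U j) = 1) \<and> (\<forall>i<n. norm (V i) = 1) \<and>
     (\<forall>j\<in>J. \<forall>i<n. (A j i \<longrightarrow> inner (U j) (V i) \<ge> m) \<and> (\<not> A j i \<longrightarrow> inner (U j) (V i) \<le> - m))"

end

theory Submission
  imports Defs
begin

theorem lemma3p2:
  fixes n k :: nat and m :: real
    and U :: "nat set \<Rightarrow> real ^ 'd" and V :: "nat \<Rightarrow> real ^ 'd"
    and x :: "nat \<Rightarrow> real"
  assumes "n \<ge> 3 * k"
    and "margin_embedding Snk (Snk_rows n k) n m U V"
    and "card {i. i < n \<and> x i \<noteq> 0} \<le> k"
  shows "norm (\<Sum>i<n. x i *\<^sub>R V i) \<ge> m * (\<Sum>i<n. \<bar>x i\<bar>)"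
proof -
  define Z where "Z = {i. i < n \<and> x i \<noteq> 0}"
  define P where "P = {i. i < n \<and> x i > 0}"
  define R where "R = {0..<n} - Z"
  have PZ: "P \<subseteq> Z" unfolding P_def Z_def by auto
  have fZ: "finite Z" unfolding Z_def by auto
  have cP: "card P \<le> card Z" using card_mono[OF fZ PZ] .
  have ZR: "Z \<subseteq> {0..<n}" unfolding Z_def by auto
  have cR: "card R = n - card Z" unfolding R_def using card_Diff_subset[OF fZ ZR] by simp
  have "k - card P \<le> card R" using cR cP assms(1,3) unfolding Z_def by linarith
  then obtain T where T: "T \<subseteq> R" "card T = k - card P" "finite T"
    by (rule obtain_subset_with_card_n)
  define S where "S = P \<union> T"
  have disj: "P \<inter> T = {}" using T(1) PZ unfolding R_def by auto
  have fP: "finite P" unfolding P_def by auto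
  have cS: "card S = k" unfolding S_def using card_Un_disjoint[OF fP T(3) disj] T(2) cP assms(3)
    unfolding Z_def by linarith
  have SS: "S \<subseteq> {0..<n}" unfolding S_def P_def using T(1) unfolding R_def by auto
  have Srow: "S \<in> Snk_rows n k" unfolding Snk_rows_def using SS cS by auto
  have xS: "i \<in> S \<Longrightarrow> x i \<ge> 0" for i
    using T(1) unfolding S_def P_def R_def Z_def by fastforce
  have xnS: "i < n \<Longrightarrow> i \<notin> S \<Longrightarrow> x i \<le> 0" for i
    unfolding S_def P_def by auto
  have emb: "norm (U S) = 1" "\<And>i. i < n \<Longrightarrow> (Snk S i \<longrightarrow> inner (U S) (V i) \<ge> m) \<and> (\<not> Snk S i \<longrightarrow> inner (U S) (V i) \<le> - m)"
    using assms(2) Srow unfolding margin_embedding_def by auto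
  have trm: "m * \<bar>x i\<bar> \<le> x i * inner (U S) (V i)" if "i < n" for i
  proof (cases "i \<in> S")
    case True
    then have "inner (U S) (V i) \<ge> m" "x i \<ge> 0" using emb(2)[OF that] xS unfolding Snk_def by auto
    then show ?thesis by (metis abs_of_nonneg mult.commute mult_left_mono)
  next
    case False
    then have "inner (U S) (V i) \<le> -m" "x i \<le> 0" using emb(2)[OF that] xnS[OF that] unfolding Snk_def by auto
    then have "x i * inner (U S) (V i) \<ge> x i * (-m)" using mult_left_mono_neg[of "inner (U S) (V i)" "-m" "x i"] by simp
    then show ?thesis using \<open>x i \<le> 0\<close> by (simp add: mult.commute)
  qed
  have "m * (\<Sum>i<n. \<bar>x i\<bar>) = (\<Sum>i<n. m * \<bar>x i\<bar>)" by (simp add: sum_distrib_left)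
  also have "\<dots> \<le> (\<Sum>i<n. x i * inner (U S) (V i))" by (rule sum_mono) (use trm in auto)
  also have "\<dots> = inner (U S) (\<Sum>i<n. x i *\<^sub>R V i)" by (simp add: inner_sum_right)
  also have "\<dots> \<le> norm (U S) * norm (\<Sum>i<n. x i *\<^sub>R V i)" by (rule norm_cauchy_schwarz)
  also have "\<dots> = norm (\<Sum>i<n. x i *\<^sub>R V i)" using emb(1) by simp
  finally show ?thesis .
qed

end
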